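(* Let $p\in(0,1)$, let $X,\gamma$ satisfy the standing assumptions in the context, and let $0\le x_0<\mathbb E[\gamma X]$. Let $q=\inf\{\mathrm{VaR}_p(g(X)):g\in\mathcal G_{\rm ns}\}$ and assume $q>0$ and $\mathbb P\big((X-q)\gamma\le\mathrm{VaR}_p((X-q)\gamma)\big)=p$. Then the problem of minimizing $\mathrm{VaR}_p(g(X))$ over $g\in\mathcal G_{\rm ns}$ admits a $\mathbb P$-a.s. unique solution, given by $g_X(X)=X\mathds 1_{\{(X-q)\gamma>c\}}+(X\wedge q)\mathds 1_{\{(X-q)\gamma\le c\}}$, where $c=\mathrm{VaR}_p((X-q)\gamma)$.
   Context: $(\Omega,\mathcal F,\mathbb P)$ is atomless. $\mathrm{VaR}_p(Y)=\inf\{x:\mathbb P(Y\le x)\ge p\}$. Standing assumptions: $X\ge0$ is a random variable whose distribution has a positive density on its support; $\gamma:\mathbb R\to\mathbb R$ is continuous and strictly positive; $\gamma$ also denotes $\gamma(X)$; $\mathbb E[\gamma]=1$, $\mathbb E[\gamma X]<\infty$. With $\mathcal G_1$ the measurable functions $\mathbb R\to\mathbb R$, $\mathcal G_{\rm ns}=\{g\in\mathcal G_1:\mathbb E[\gamma g(X)]\ge x_0,\ 0\le g(X)\le X\}$. *)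

theory Defs
  imports "HOL-Probability.Probability"
begin

definition atomless :: "'a measure \<Rightarrow> bool" where
  "atomless M \<longleftrightarrow> (\<forall>A\<in>sets M. measure M A > 0 \<longrightarrow>
     (\<exists>B\<in>sets M. B \<subseteq> A \<and> 0 < measure M B \<and> measure M B < measure M A))"

definition VaR :: "'a measure \<Rightarrow> real \<Rightarrow> ('a \<Rightarrow> real) \<Rightarrow> real" where
  "VaR M p Y = Inf {x::real. measure M {\<omega>\<in>space M. Y \<omega> \<le> x} \<ge> p}"

definition dist_support :: "'a measure \<Rightarrow> ('a \<Rightarrow> real) \<Rightarrow> real set" where
  "dist_support M X = {x. \<forall>e>0. measure M {\<omega>\<in>space M. X \<omega> \<in> ball x e} > 0}"

definition pos_density_on_support :: "'a measure \<Rightarrow> ('a \<Rightarrow> real) \<Rightarrow> bool" where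
  "pos_density_on_support M X \<longleftrightarrow>
     (\<exists>f. distributed M lborel X f \<and> (\<forall>x\<in>dist_support M X. f x > 0))"

definition G_ns :: "'a measure \<Rightarrow> ('a \<Rightarrow> real) \<Rightarrow> (real \<Rightarrow> real) \<Rightarrow> real \<Rightarrow> (real \<Rightarrow> real) set" where
  "G_ns M X \<gamma> x0 = {g. g \<in> borel_measurable borel \<and>
      (AE \<omega> in M. 0 \<le> g (X \<omega>) \<and> g (X \<omega>) \<le> X \<omega>) \<and>
      (\<integral>\<omega>. \<gamma> (X \<omega>) * g (X \<omega>) \<partial>M) \<ge> x0}"

end

theory Submission
  imports Defs
begin

lemma VaR_props:
  fixes Y :: "'a \<Rightarrow> real"
  assumes M: "prob_space M" and p: "0 < p" "p < 1"
    and Ym[measurable]: "Y \<in> borel_measurable M" and Y0: "AE \<omega> in M. 0 \<le> Y \<omega>"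
  shows "p \<le> measure M {\<omega>\<in>space M. Y \<omega> \<le> VaR M p Y}"
    and "0 \<le> VaR M p Y"
    and "\<And>x. p \<le> measure M {\<omega>\<in>space M. Y \<omega> \<le> x} \<Longrightarrow> VaR M p Y \<le> x"
proof -
  interpret P: prob_space M by fact
  define S where "S = {x::real. measure M {\<omega>\<in>space M. Y \<omega> \<le> x} \<ge> p}"
  have VS: "VaR M p Y = Inf S" by (simp add: VaR_def S_def)
  have S0: "0 \<le> x" if "x \<in> S" for x
  proof (rule ccontr)
    assume "\<not> 0 \<le> x"
    have "AE \<omega> in M. \<omega> \<notin> {\<omega>\<in>space M. Y \<omega> \<le> x}"
      using Y0 by eventually_elim (use \<open>\<not> 0 \<le> x\<close> in auto)
    then have "measure M {\<omega>\<in>space M. Y \<omega> \<le> x} = 0"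
      by (subst P.prob_eq_0) auto
    with that p show False by (simp add: S_def)
  qed
  have bdd: "bdd_below S" using S0 by (intro bdd_belowI[of _ 0]) auto
  have Sne: "S \<noteq> {}"
  proof -
    define A where "A n = {\<omega>\<in>space M. Y \<omega> \<le> real n}" for n
    have "(\<lambda>n. measure M (A n)) \<longlonglongrightarrow> measure M (\<Union>n. A n)"
      by (rule P.finite_Lim_measure_incseq) (auto simp: A_def incseq_def)
    moreover have "(\<Union>n. A n) = space M"
      by (auto simp: A_def intro: real_nat_ceiling_ge)
    ultimately have "(\<lambda>n. measure M (A n)) \<longlonglongrightarrow> 1" by (simp add: P.prob_space)
    from order_tendstoD(1)[OF this p(2)] obtain N where "p < measure M (A N)"
      by (auto simp: eventually_sequentially)
    then have "real N \<in> S" by (auto simp: S_def A_def)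
    then show ?thesis by auto
  qed
  show "VaR M p Y \<le> x" if "p \<le> measure M {\<omega>\<in>space M. Y \<omega> \<le> x}" for x
    unfolding VS using that bdd by (intro cInf_lower) (auto simp: S_def)
  show "0 \<le> VaR M p Y" unfolding VS using Sne S0 by (intro cInf_greatest) auto
  define v where "v = Inf S"
  define B where "B n = {\<omega>\<in>space M. Y \<omega> \<le> v + inverse (real (Suc n))}" for n
  have Bp: "p \<le> measure M (B n)" for n
  proof -
    have "v < v + inverse (real (Suc n))" by simp
    from cInf_lessD[OF Sne this[unfolded v_def]] obtain x where x: "x \<in> S" "x < v + inverse (real (Suc n))"
      by (auto simp: v_def)
    have "p \<le> measure M {\<omega>\<in>space M. Y \<omega> \<le> x}" using x by (simp add: S_def)
    also have "\<dots> \<le> measure M (B n)"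
      using x by (intro P.finite_measure_mono) (auto simp: B_def)
    finally show ?thesis .
  qed
  have "(\<lambda>n. measure M (B n)) \<longlonglongrightarrow> measure M (\<Inter>n. B n)"
  proof (rule P.finite_Lim_measure_decseq)
    show "range B \<subseteq> sets M" by (auto simp: B_def)
    show "decseq B" unfolding decseq_def B_def
      by (auto simp: frac_le intro: order_trans)
  qed
  moreover have "(\<Inter>n. B n) = {\<omega>\<in>space M. Y \<omega> \<le> v}"
  proof (auto simp: B_def)
    fix \<omega> assume "\<omega> \<in> space M" and all: "\<forall>n. Y \<omega> \<le> v + inverse (1 + real n)"
    show "Y \<omega> \<le> v"
    proof (rule ccontr)
      assume "\<not> Y \<omega> \<le> v"
      then obtain n where "inverse (real (Suc n)) < Y \<omega> - v" using reals_Archimedean[of "Y \<omega> - v"] by auto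
      with all[rule_format, of n] show False by simp
    qed
  next
    fix \<omega> :: 'a and n :: nat assume "Y \<omega> \<le> v"
    moreover have "0 \<le> inverse (1 + real n)" by simp
    ultimately show "Y \<omega> \<le> v + inverse (1 + real n)" by linarith
  qed
  ultimately have "p \<le> measure M {\<omega>\<in>space M. Y \<omega> \<le> v}"
    using Bp by (intro LIMSEQ_le_const) auto
  then show "p \<le> measure M {\<omega>\<in>space M. Y \<omega> \<le> VaR M p Y}" by (simp add: VS v_def)
qed

lemma exch:
  fixes W :: "'a \<Rightarrow> real"
  assumes M: "prob_space M" and Wi: "integrable M W" and W0: "\<forall>\<omega>\<in>space M. 0 \<le> W \<omega>"
    and c: "0 \<le> c" and B: "B \<in> sets M"
    and A_def: "A = {\<omega>\<in>space M. W \<omega> \<le> c}"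
    and PAB: "measure M A \<le> measure M B"
  shows "(\<integral>\<omega>. W \<omega> * indicator A \<omega> \<partial>M) \<le> (\<integral>\<omega>. W \<omega> * indicator B \<omega> \<partial>M)"
    and "(\<integral>\<omega>. W \<omega> * indicator B \<omega> \<partial>M) \<le> (\<integral>\<omega>. W \<omega> * indicator A \<omega> \<partial>M) \<Longrightarrow>
         AE \<omega> in M. W \<omega> * indicator B \<omega> = W \<omega> * indicator A \<omega>"
proof -
  interpret P: prob_space M by fact
  have Wm[measurable]: "W \<in> borel_measurable M" using Wi by (rule borel_measurable_integrable)
  have A[measurable]: "A \<in> sets M" unfolding A_def by measurable
  note B[measurable]
  define D where "D \<omega> = (W \<omega> - c) * (indicator B \<omega> - indicator A \<omega>)" for \<omega>
  have D0: "0 \<le> D \<omega>" if "\<omega> \<in> space M" for \<omega>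
    using that by (auto simp: D_def A_def indicator_def)
  have iA: "integrable M (\<lambda>\<omega>. W \<omega> * indicator A \<omega>)" by (intro integrable_real_mult_indicator A Wi)
  have iB: "integrable M (\<lambda>\<omega>. W \<omega> * indicator B \<omega>)" by (intro integrable_real_mult_indicator B Wi)
  have iiA: "integrable M (indicator A :: 'a \<Rightarrow> real)" by (intro integrable_real_indicator) (auto simp: P.emeasure_eq_measure)
  have iiB: "integrable M (indicator B :: 'a \<Rightarrow> real)" by (intro integrable_real_indicator) (auto simp: P.emeasure_eq_measure)
  have Deq: "D = (\<lambda>\<omega>. (W \<omega> * indicator B \<omega> - W \<omega> * indicator A \<omega>) - c * (indicator B \<omega> - indicator A \<omega>))"
    by (auto simp: D_def algebra_simps)
  have iD: "integrable M D" unfolding Deq using iA iB iiA iiB by auto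
  have ID: "integral\<^sup>L M D = ((\<integral>\<omega>. W \<omega> * indicator B \<omega> \<partial>M) - (\<integral>\<omega>. W \<omega> * indicator A \<omega> \<partial>M))
       - c * (measure M B - measure M A)"
    unfolding Deq using iA iB iiA iiB
    by (simp add: Bochner_Integration.integral_diff integral_mult_right_zero Int_absorb2 sets.sets_into_space)
  have ID0: "0 \<le> integral\<^sup>L M D" using D0 by (intro integral_nonneg_AE) auto
  show "(\<integral>\<omega>. W \<omega> * indicator A \<omega> \<partial>M) \<le> (\<integral>\<omega>. W \<omega> * indicator B \<omega> \<partial>M)"
    using ID ID0 PAB c by (smt (verit) mult_nonneg_nonneg)
  assume le: "(\<integral>\<omega>. W \<omega> * indicator B \<omega> \<partial>M) \<le> (\<integral>\<omega>. W \<omega> * indicator A \<omega> \<partial>M)"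
  have cz: "c * (measure M B - measure M A) = 0" and IDz: "integral\<^sup>L M D = 0"
    using ID ID0 PAB c le by (smt (verit) mult_nonneg_nonneg)+
  have aeD: "AE \<omega> in M. D \<omega> = 0"
    using IDz iD D0 by (subst (asm) integral_nonneg_eq_0_iff_AE) auto
  show "AE \<omega> in M. W \<omega> * indicator B \<omega> = W \<omega> * indicator A \<omega>"
  proof (cases "c = 0")
    case True
    from aeD show ?thesis by eventually_elim (simp add: D_def algebra_simps True)
  next
    case False
    with cz have PBA: "measure M B = measure M A" by simp
    have ae1: "AE \<omega> in M. indicator B \<omega> \<le> (indicator A \<omega> :: real)"
      using aeD AE_space by eventually_elim (auto simp: D_def A_def indicator_def split: if_splits)
    define E where "E \<omega> = (indicator A \<omega> - indicator B \<omega> :: real)" for \<omega>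
    have iE: "integrable M E" unfolding E_def using iiA iiB by auto
    have "integral\<^sup>L M E = 0" unfolding E_def using iiA iiB PBA
      by (simp add: Bochner_Integration.integral_diff Int_absorb2 sets.sets_into_space)
    then have "AE \<omega> in M. E \<omega> = 0"
      using iE ae1 by (subst (asm) integral_nonneg_eq_0_iff_AE) (auto simp: E_def elim!: eventually_mono)
    then show ?thesis by eventually_elim (simp add: E_def)
  qed
qed

theorem corollary1:
  fixes M :: "'a measure" and X :: "'a \<Rightarrow> real" and \<gamma> :: "real \<Rightarrow> real"
    and p x0 q c :: real
  assumes "prob_space M" and "atomless M"
    and "p > 0" and "p < 1"
    and "X \<in> borel_measurable M" and "\<forall>\<omega>\<in>space M. X \<omega> \<ge> 0"
    and "pos_density_on_support M X"
    and "continuous_on UNIV \<gamma>" and "\<forall>x. \<gamma> x > 0"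
    and "integrable M (\<lambda>\<omega>. \<gamma> (X \<omega>))" and "(\<integral>\<omega>. \<gamma> (X \<omega>) \<partial>M) = 1"
    and "integrable M (\<lambda>\<omega>. \<gamma> (X \<omega>) * X \<omega>)"
    and "0 \<le> x0" and "x0 < (\<integral>\<omega>. \<gamma> (X \<omega>) * X \<omega> \<partial>M)"
    and q_def: "q = Inf ((\<lambda>g. VaR M p (\<lambda>\<omega>. g (X \<omega>))) ` G_ns M X \<gamma> x0)"
    and "q > 0"
    and c_def: "c = VaR M p (\<lambda>\<omega>. (X \<omega> - q) * \<gamma> (X \<omega>))"
    and "measure M {\<omega>\<in>space M. (X \<omega> - q) * \<gamma> (X \<omega>) \<le> c} = p"
  shows "let gX = (\<lambda>x. if (x - q) * \<gamma> x > c then x else min x q) in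
     gX \<in> G_ns M X \<gamma> x0
     \<and> (\<forall>g\<in>G_ns M X \<gamma> x0. VaR M p (\<lambda>\<omega>. gX (X \<omega>)) \<le> VaR M p (\<lambda>\<omega>. g (X \<omega>)))
     \<and> (\<forall>g\<in>G_ns M X \<gamma> x0. VaR M p (\<lambda>\<omega>. g (X \<omega>)) \<le> VaR M p (\<lambda>\<omega>. gX (X \<omega>))
          \<longrightarrow> (AE \<omega> in M. g (X \<omega>) = gX (X \<omega>)))"
proof -
  interpret P: prob_space M by fact
  note Xm[measurable] = assms(5)
  have X0: "\<And>\<omega>. \<omega> \<in> space M \<Longrightarrow> 0 \<le> X \<omega>" using assms(6) by auto
  have gpos: "\<And>x. 0 < \<gamma> x" using assms(9) by auto
  have gm[measurable]: "\<gamma> \<in> borel_measurable borel" using assms(8) by (rule borel_measurable_continuous_onI)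
  have ig: "integrable M (\<lambda>\<omega>. \<gamma> (X \<omega>))" by fact
  have igX: "integrable M (\<lambda>\<omega>. \<gamma> (X \<omega>) * X \<omega>)" by fact
  have Eg: "(\<integral>\<omega>. \<gamma> (X \<omega>) \<partial>M) = 1" by fact
  define EgX where "EgX = (\<integral>\<omega>. \<gamma> (X \<omega>) * X \<omega> \<partial>M)"
  define G where "G t = (\<lambda>x::real. if (x - q) * \<gamma> x > c then x else min x t)" for t
  have Gm[measurable]: "G t \<in> borel_measurable borel" for t unfolding G_def by measurable
  have Gb: "0 \<le> G t (X \<omega>) \<and> G t (X \<omega>) \<le> X \<omega>" if "0 \<le> t" "\<omega> \<in> space M" for t \<omega>
    using that X0[OF that(2)] by (auto simp: G_def)
  define A where "A = {\<omega>\<in>space M. (X \<omega> - q) * \<gamma> (X \<omega>) \<le> c}"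
  have A[measurable]: "A \<in> sets M" unfolding A_def by measurable
  have PA: "measure M A = p" using assms(18) by (simp add: A_def)
  have Gint: "integrable M (\<lambda>\<omega>. \<gamma> (X \<omega>) * G t (X \<omega>))" if "0 \<le> t" for t
  proof (rule Bochner_Integration.integrable_bound[OF igX])
    show "(\<lambda>\<omega>. \<gamma> (X \<omega>) * G t (X \<omega>)) \<in> borel_measurable M" by measurable
    show "AE \<omega> in M. norm (\<gamma> (X \<omega>) * G t (X \<omega>)) \<le> norm (\<gamma> (X \<omega>) * X \<omega>)"
      using AE_space
    proof eventually_elim
      case (elim \<omega>)
      with Gb[OF that elim] gpos[of "X \<omega>"] show ?case
        by (auto simp: abs_mult intro!: mult_left_mono)
    qed
  qed
  have GAE: "AE \<omega> in M. 0 \<le> G t (X \<omega>) \<and> G t (X \<omega>) \<le> X \<omega>" if "0 \<le> t" for t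
    using AE_space by eventually_elim (use Gb[OF that] in auto)
  have Gvar: "VaR M p (\<lambda>\<omega>. G t (X \<omega>)) \<le> t" if "0 \<le> t" for t
  proof (rule VaR_props(3)[OF assms(1,3,4)])
    show "(\<lambda>\<omega>. G t (X \<omega>)) \<in> borel_measurable M" by measurable
    show "AE \<omega> in M. 0 \<le> G t (X \<omega>)" using GAE[OF that] by eventually_elim auto
    have "p = measure M A" using PA by simp
    also have "\<dots> \<le> measure M {\<omega> \<in> space M. G t (X \<omega>) \<le> t}"
      by (intro P.finite_measure_mono) (auto simp: A_def G_def)
    finally show "p \<le> measure M {\<omega> \<in> space M. G t (X \<omega>) \<le> t}" .
  qed
  have gcomp: "(\<lambda>\<omega>. g (X \<omega>)) \<in> borel_measurable M" if "g \<in> G_ns M X \<gamma> x0" for g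
    using that by (intro measurable_compose[OF Xm]) (simp add: G_ns_def)
  have gAE: "AE \<omega> in M. 0 \<le> g (X \<omega>) \<and> g (X \<omega>) \<le> X \<omega>" if "g \<in> G_ns M X \<gamma> x0" for g
    using that by (simp add: G_ns_def)
  have gx0: "x0 \<le> (\<integral>\<omega>. \<gamma> (X \<omega>) * g (X \<omega>) \<partial>M)" if "g \<in> G_ns M X \<gamma> x0" for g
    using that by (simp add: G_ns_def)
  have gint: "integrable M (\<lambda>\<omega>. \<gamma> (X \<omega>) * g (X \<omega>))" if g: "g \<in> G_ns M X \<gamma> x0" for g
  proof (rule Bochner_Integration.integrable_bound[OF igX])
    show "(\<lambda>\<omega>. \<gamma> (X \<omega>) * g (X \<omega>)) \<in> borel_measurable M"
      using gcomp[OF g] by measurable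
    show "AE \<omega> in M. norm (\<gamma> (X \<omega>) * g (X \<omega>)) \<le> norm (\<gamma> (X \<omega>) * X \<omega>)"
      using gAE[OF g]
    proof eventually_elim
      case (elim \<omega>)
      with gpos[of "X \<omega>"] show ?case
        by (auto simp: abs_mult intro!: mult_left_mono)
    qed
  qed
  have VaRg0: "0 \<le> VaR M p (\<lambda>\<omega>. g (X \<omega>))" if g: "g \<in> G_ns M X \<gamma> x0" for g
    by (rule VaR_props(2)[OF assms(1,3,4) gcomp[OF g]]) (use gAE[OF g] in \<open>auto elim: eventually_mono\<close>)
  have qle: "q \<le> VaR M p (\<lambda>\<omega>. g (X \<omega>))" if g: "g \<in> G_ns M X \<gamma> x0" for g
    unfolding q_def
    by (rule cInf_lower) (use g VaRg0 in \<open>auto intro!: bdd_belowI[of _ 0]\<close>)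
  have idG: "(\<lambda>x. x) \<in> G_ns M X \<gamma> x0"
    using assms(14) X0 by (auto simp: G_ns_def intro!: AE_I2)
  have Gne: "G_ns M X \<gamma> x0 \<noteq> {}" using idG by auto
  define I where "I t = (\<integral>\<omega>. \<gamma> (X \<omega>) * G t (X \<omega>) \<partial>M)" for t
  have Idiff: "I q \<le> I t + (q - t)" if "0 \<le> t" "t \<le> q" for t
  proof -
    have "I q \<le> (\<integral>\<omega>. \<gamma> (X \<omega>) * G t (X \<omega>) + (q - t) * \<gamma> (X \<omega>) \<partial>M)"
      unfolding I_def
    proof (rule integral_mono)
      show "integrable M (\<lambda>\<omega>. \<gamma> (X \<omega>) * G q (X \<omega>))" using Gint assms(16) by simp
      show "integrable M (\<lambda>\<omega>. \<gamma> (X \<omega>) * G t (X \<omega>) + (q - t) * \<gamma> (X \<omega>))"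
        using Gint[OF that(1)] ig by auto
      fix \<omega> assume "\<omega> \<in> space M"
      have "G q (X \<omega>) \<le> G t (X \<omega>) + (q - t)" using that by (auto simp: G_def)
      then have "\<gamma> (X \<omega>) * G q (X \<omega>) \<le> \<gamma> (X \<omega>) * (G t (X \<omega>) + (q - t))"
        using gpos[of "X \<omega>"] by (intro mult_left_mono) auto
      then show "\<gamma> (X \<omega>) * G q (X \<omega>) \<le> \<gamma> (X \<omega>) * G t (X \<omega>) + (q - t) * \<gamma> (X \<omega>)"
        by (simp add: algebra_simps)
    qed
    also have "\<dots> = I t + (q - t)"
      unfolding I_def using Gint[OF that(1)] ig Eg by simp
    finally show ?thesis .
  qed
  have binding: "I q \<le> x0"
  proof (rule ccontr)
    assume "\<not> I q \<le> x0"
    define \<delta> where "\<delta> = min (q/2) ((I q - x0)/2)"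
    define t where "t = q - \<delta>"
    have t0: "0 < t" "t < q" "0 \<le> t" using assms(16) \<open>\<not> I q \<le> x0\<close> by (auto simp: t_def \<delta>_def)
    have d: "\<delta> \<le> (I q - x0)/2" unfolding \<delta>_def by (rule min.cobounded2)
    have "q - t = \<delta>" by (simp add: t_def)
    with Idiff[of t] t0 have "I q \<le> I t + \<delta>" by simp
    then have "x0 < I t" using d \<open>\<not> I q \<le> x0\<close> by (simp add: field_simps)
    then have "G t \<in> G_ns M X \<gamma> x0" using GAE[OF t0(3)] by (auto simp: G_ns_def I_def)
    from qle[OF this] Gvar[OF t0(3)] t0 show False by simp
  qed
  have c0: "0 \<le> c"
  proof (rule ccontr)
    assume "\<not> 0 \<le> c"
    have "G q (X \<omega>) = X \<omega>" if "\<omega> \<in> space M" for \<omega>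
    proof -
      have "X \<omega> \<le> q" if "(X \<omega> - q) * \<gamma> (X \<omega>) \<le> c"
      proof (rule ccontr)
        assume "\<not> X \<omega> \<le> q"
        then have "0 \<le> (X \<omega> - q) * \<gamma> (X \<omega>)" using gpos[of "X \<omega>"] by simp
        with that \<open>\<not> 0 \<le> c\<close> show False by simp
      qed
      then show ?thesis by (auto simp: G_def)
    qed
    then have "I q = EgX" unfolding I_def EgX_def by (intro Bochner_Integration.integral_cong) auto
    with binding assms(14) show False by (simp add: EgX_def)
  qed
  define W where "W \<omega> = \<gamma> (X \<omega>) * max (X \<omega> - q) 0" for \<omega>
  have Wm[measurable]: "W \<in> borel_measurable M" unfolding W_def by measurable
  have W0: "\<forall>\<omega>\<in>space M. 0 \<le> W \<omega>" unfolding W_def using gpos by (metis less_imp_le max.cobounded2 mult_nonneg_nonneg)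
  have Wi: "integrable M W"
  proof (rule Bochner_Integration.integrable_bound[OF igX Wm])
    show "AE \<omega> in M. norm (W \<omega>) \<le> norm (\<gamma> (X \<omega>) * X \<omega>)"
      using AE_space
    proof eventually_elim
      case (elim \<omega>)
      with X0[OF elim] gpos[of "X \<omega>"] assms(16) show ?case
        by (auto simp: W_def abs_mult intro!: mult_left_mono)
    qed
  qed
  have AW: "A = {\<omega>\<in>space M. W \<omega> \<le> c}"
  proof -
    have "(X \<omega> - q) * \<gamma> (X \<omega>) \<le> c \<longleftrightarrow> W \<omega> \<le> c" for \<omega>
    proof (cases "X \<omega> \<le> q")
      case True
      then have "(X \<omega> - q) * \<gamma> (X \<omega>) \<le> 0" using gpos[of "X \<omega>"] by (simp add: mult_nonpos_nonneg)
      with True c0 show ?thesis by (simp add: W_def max_def)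
    next
      case False
      then show ?thesis by (simp add: W_def max_def mult.commute)
    qed
    then show ?thesis by (auto simp: A_def)
  qed
  have iWA: "integrable M (\<lambda>\<omega>. W \<omega> * indicator A \<omega>)" by (intro integrable_real_mult_indicator A Wi)
  have Iq: "I q = EgX - (\<integral>\<omega>. W \<omega> * indicator A \<omega> \<partial>M)"
  proof -
    have "I q = (\<integral>\<omega>. \<gamma> (X \<omega>) * X \<omega> - W \<omega> * indicator A \<omega> \<partial>M)"
      unfolding I_def
      by (intro Bochner_Integration.integral_cong) (auto simp: G_def W_def A_def indicator_def max_def min_def algebra_simps)
    also have "\<dots> = EgX - (\<integral>\<omega>. W \<omega> * indicator A \<omega> \<partial>M)"
      unfolding EgX_def using igX iWA by (rule Bochner_Integration.integral_diff)
    finally show ?thesis .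
  qed
  have ub: "(\<integral>\<omega>. \<gamma> (X \<omega>) * g (X \<omega>) \<partial>M) \<le> EgX - (\<integral>\<omega>. W \<omega> * indicator B \<omega> \<partial>M) + (t - q)"
   and ubAE: "AE \<omega> in M. \<gamma> (X \<omega>) * g (X \<omega>) \<le> \<gamma> (X \<omega>) * X \<omega> - W \<omega> * indicator B \<omega> + (t - q) * \<gamma> (X \<omega>)"
    if g: "g \<in> G_ns M X \<gamma> x0" and t: "q \<le> t" and B: "B = {\<omega>\<in>space M. g (X \<omega>) \<le> t}" for g t B
  proof -
    have Bs[measurable]: "B \<in> sets M" unfolding B using gcomp[OF g] by measurable
    have iWB: "integrable M (\<lambda>\<omega>. W \<omega> * indicator B \<omega>)" by (intro integrable_real_mult_indicator Bs Wi)
    show ae: "AE \<omega> in M. \<gamma> (X \<omega>) * g (X \<omega>) \<le> \<gamma> (X \<omega>) * X \<omega> - W \<omega> * indicator B \<omega> + (t - q) * \<gamma> (X \<omega>)"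
      using gAE[OF g] AE_space
    proof eventually_elim
      case (elim \<omega>)
      have "g (X \<omega>) \<le> X \<omega> - max (X \<omega> - q) 0 * indicator B \<omega> + (t - q)"
        using elim t by (auto simp: B indicator_def max_def)
      then have "\<gamma> (X \<omega>) * g (X \<omega>) \<le> \<gamma> (X \<omega>) * (X \<omega> - max (X \<omega> - q) 0 * indicator B \<omega> + (t - q))"
        using gpos[of "X \<omega>"] by (intro mult_left_mono) auto
      then show ?case by (simp add: W_def algebra_simps)
    qed
    have "(\<integral>\<omega>. \<gamma> (X \<omega>) * g (X \<omega>) \<partial>M) \<le> (\<integral>\<omega>. \<gamma> (X \<omega>) * X \<omega> - W \<omega> * indicator B \<omega> + (t - q) * \<gamma> (X \<omega>) \<partial>M)"
      by (rule integral_mono_AE[OF gint[OF g] _ ae]) (use igX iWB ig in auto)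
    also have "\<dots> = EgX - (\<integral>\<omega>. W \<omega> * indicator B \<omega> \<partial>M) + (t - q)"
      using igX iWB ig Eg by (simp add: EgX_def Bochner_Integration.integral_diff Bochner_Integration.integral_add)
    finally show "(\<integral>\<omega>. \<gamma> (X \<omega>) * g (X \<omega>) \<partial>M) \<le> EgX - (\<integral>\<omega>. W \<omega> * indicator B \<omega> \<partial>M) + (t - q)" .
  qed
  have Pg: "p \<le> measure M {\<omega>\<in>space M. g (X \<omega>) \<le> t}"
    if g: "g \<in> G_ns M X \<gamma> x0" and t: "VaR M p (\<lambda>\<omega>. g (X \<omega>)) \<le> t" for g t
  proof -
    have "p \<le> measure M {\<omega>\<in>space M. g (X \<omega>) \<le> VaR M p (\<lambda>\<omega>. g (X \<omega>))}"
      by (rule VaR_props(1)[OF assms(1,3,4) gcomp[OF g]]) (use gAE[OF g] in \<open>auto elim: eventually_mono\<close>)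
    also have "\<dots> \<le> measure M {\<omega>\<in>space M. g (X \<omega>) \<le> t}"
      using t gcomp[OF g] by (intro P.finite_measure_mono) auto
    finally show ?thesis .
  qed
  have exA: "(\<integral>\<omega>. W \<omega> * indicator A \<omega> \<partial>M) \<le> (\<integral>\<omega>. W \<omega> * indicator B \<omega> \<partial>M)"
    and exA2: "(\<integral>\<omega>. W \<omega> * indicator B \<omega> \<partial>M) \<le> (\<integral>\<omega>. W \<omega> * indicator A \<omega> \<partial>M) \<Longrightarrow>
         AE \<omega> in M. W \<omega> * indicator B \<omega> = W \<omega> * indicator A \<omega>"
    if g: "g \<in> G_ns M X \<gamma> x0" and B: "B = {\<omega>\<in>space M. g (X \<omega>) \<le> t}"
      and PB: "p \<le> measure M B" for g t B
  proof -
    have Bs: "B \<in> sets M" unfolding B using gcomp[OF g] by measurable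
    show "(\<integral>\<omega>. W \<omega> * indicator A \<omega> \<partial>M) \<le> (\<integral>\<omega>. W \<omega> * indicator B \<omega> \<partial>M)"
      by (rule exch(1)[OF assms(1) Wi W0 c0 Bs AW]) (use PA PB in simp)
    show "(\<integral>\<omega>. W \<omega> * indicator B \<omega> \<partial>M) \<le> (\<integral>\<omega>. W \<omega> * indicator A \<omega> \<partial>M) \<Longrightarrow>
         AE \<omega> in M. W \<omega> * indicator B \<omega> = W \<omega> * indicator A \<omega>"
      by (rule exch(2)[OF assms(1) Wi W0 c0 Bs AW]) (use PA PB in simp)+
  qed
  have feas: "x0 \<le> I q"
  proof (rule field_le_epsilon)
    fix e :: real assume e: "0 < e"
    have "Inf ((\<lambda>g. VaR M p (\<lambda>\<omega>. g (X \<omega>))) ` G_ns M X \<gamma> x0) < q + e" using e q_def by simp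
    from cInf_lessD[OF _ this] Gne obtain g where g: "g \<in> G_ns M X \<gamma> x0"
      and gv: "VaR M p (\<lambda>\<omega>. g (X \<omega>)) < q + e" by auto
    define B where "B = {\<omega>\<in>space M. g (X \<omega>) \<le> q + e}"
    have PB: "p \<le> measure M B" unfolding B_def using Pg[OF g] gv by simp
    have "x0 \<le> (\<integral>\<omega>. \<gamma> (X \<omega>) * g (X \<omega>) \<partial>M)" by (rule gx0[OF g])
    also have "\<dots> \<le> EgX - (\<integral>\<omega>. W \<omega> * indicator B \<omega> \<partial>M) + (q + e - q)"
      by (rule ub[OF g _ B_def]) (use e in simp)
    also have "\<dots> \<le> EgX - (\<integral>\<omega>. W \<omega> * indicator A \<omega> \<partial>M) + e"
      using exA[OF g B_def PB] by simp
    finally show "x0 \<le> I q + e" using Iq by simp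
  qed
  have GqG: "G q \<in> G_ns M X \<gamma> x0" using feas GAE[of q] assms(16) by (auto simp: G_ns_def I_def)
  have opt: "VaR M p (\<lambda>\<omega>. G q (X \<omega>)) \<le> VaR M p (\<lambda>\<omega>. g (X \<omega>))" if "g \<in> G_ns M X \<gamma> x0" for g
    using Gvar[of q] assms(16) qle[OF that] by simp
  have uniq: "AE \<omega> in M. g (X \<omega>) = G q (X \<omega>)"
    if g: "g \<in> G_ns M X \<gamma> x0" and le: "VaR M p (\<lambda>\<omega>. g (X \<omega>)) \<le> VaR M p (\<lambda>\<omega>. G q (X \<omega>))" for g
  proof -
    define B where "B = {\<omega>\<in>space M. g (X \<omega>) \<le> q}"
    have Bs[measurable]: "B \<in> sets M" unfolding B_def using gcomp[OF g] by measurable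
    have iWB: "integrable M (\<lambda>\<omega>. W \<omega> * indicator B \<omega>)" by (intro integrable_real_mult_indicator Bs Wi)
    have PB: "p \<le> measure M B" unfolding B_def
      using Pg[OF g] le Gvar[of q] assms(16) by simp
    have u: "(\<integral>\<omega>. \<gamma> (X \<omega>) * g (X \<omega>) \<partial>M) \<le> EgX - (\<integral>\<omega>. W \<omega> * indicator B \<omega> \<partial>M)"
      using ub[OF g order.refl B_def] by simp
    have Iqx: "I q = x0" using feas binding by simp
    have "(\<integral>\<omega>. W \<omega> * indicator B \<omega> \<partial>M) \<le> (\<integral>\<omega>. W \<omega> * indicator A \<omega> \<partial>M)"
      using u gx0[OF g] Iqx Iq by simp
    from exA2[OF g B_def PB this] have aeW: "AE \<omega> in M. W \<omega> * indicator B \<omega> = W \<omega> * indicator A \<omega>" .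
    define h where "h \<omega> = \<gamma> (X \<omega>) * X \<omega> - W \<omega> * indicator B \<omega> - \<gamma> (X \<omega>) * g (X \<omega>)" for \<omega>
    have ih: "integrable M h" unfolding h_def using igX iWB gint[OF g] by auto
    have h0: "AE \<omega> in M. 0 \<le> h \<omega>" using ubAE[OF g order.refl B_def] by eventually_elim (simp add: h_def)
    have "integral\<^sup>L M h = EgX - (\<integral>\<omega>. W \<omega> * indicator B \<omega> \<partial>M) - (\<integral>\<omega>. \<gamma> (X \<omega>) * g (X \<omega>) \<partial>M)"
      unfolding h_def EgX_def using igX iWB gint[OF g] by (simp add: Bochner_Integration.integral_diff)
    then have "integral\<^sup>L M h \<le> 0" using exA[OF g B_def PB] gx0[OF g] Iqx Iq by simp
    then have "integral\<^sup>L M h = 0" using integral_nonneg_AE[OF h0] by simp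
    then have aeh: "AE \<omega> in M. h \<omega> = 0" using ih h0 by (subst (asm) integral_nonneg_eq_0_iff_AE) auto
    from aeh aeW AE_space show ?thesis
    proof eventually_elim
      case (elim \<omega>)
      then have "\<gamma> (X \<omega>) * g (X \<omega>) = \<gamma> (X \<omega>) * X \<omega> - W \<omega> * indicator A \<omega>" by (simp add: h_def)
      also have "\<dots> = \<gamma> (X \<omega>) * G q (X \<omega>)"
        using elim by (auto simp: G_def W_def A_def indicator_def max_def min_def algebra_simps)
      finally show ?case using gpos[of "X \<omega>"] by simp
    qed
  qed
  have Gq: "G q = (\<lambda>x. if (x - q) * \<gamma> x > c then x else min x q)" by (simp add: G_def)
  show ?thesis unfolding Let_def Gq[symmetric] using GqG opt uniq by blast
qed

end
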